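(* Let $N$ be a finite set with $|N|\ge2$ and let $o\in\mathbb{R}^{\Upsilon}$ be an SE objective. Then there exists a unique $\tau_o\in\mathbb{R}^{\mathcal{S}}$ such that $\langle o,\eta\rangle_{\Upsilon}=\langle\tau_o,c_\eta\rangle_{\mathcal{S}}$ for all $\eta\in\mathbb{R}^{\Upsilon}$. Specifically, $$\tau_o(T)=\sum_{\emptyset\neq K\subseteq R}(-1)^{|R\setminus K|}\,o(b|K)\quad\text{for } T\in\mathcal{S},\ b\in T,\ R=T\setminus\{b\},$$ and this expression does not depend on the choice of $b\in T$.
   Context: $\mathrm{DAG}(N)$ is the set of acyclic directed graphs over $N$; $\mathrm{pa}_G(a)$ is the parent set of $a$ in $G$; $G\sim H$ (Markov equivalence) means same adjacencies and same immoralities. $\Upsilon=\{(a|B): a\in N,\ \emptyset\neq B\subseteq N\setminus\{a\}\}$; $\eta_G\in\mathbb{R}^{\Upsilon}$ has $\eta_G(a|B)=1$ if $B=\mathrm{pa}_G(a)$, else $0$. $o$ is an SE objective if $\langle o,\eta_G\rangle=\langle o,\eta_H\rangle$ whenever $G\sim H$. $\mathcal{S}=\{S\subseteq N:|S|\ge 2\}$, and for $\eta\in\mathbb{R}^{\Upsilon}$, $c_\eta\in\mathbb{R}^{\mathcal{S}}$ is $c_\eta(S)=\sum_{a\in S}\sum_{B:\,S\setminus\{a\}\subseteq B\subseteq N\setminus\{a\}}\eta(a|B)$. Convention: $o(b|\emptyset)=0$ for $b\in N$. *)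

theory Defs
  imports Complex_Main
begin

text \<open>Index set Upsilon: pairs (a,B) standing for (a|B).\<close>
definition Ups :: "'a set \<Rightarrow> ('a \<times> 'a set) set" where
  "Ups N = {(a, B). a \<in> N \<and> B \<noteq> {} \<and> B \<subseteq> N - {a}}"

definition Sets2 :: "'a set \<Rightarrow> 'a set set" where
  "Sets2 N = {S. S \<subseteq> N \<and> 2 \<le> card S}"

definition ip_Ups :: "'a set \<Rightarrow> ('a \<times> 'a set \<Rightarrow> real) \<Rightarrow> ('a \<times> 'a set \<Rightarrow> real) \<Rightarrow> real" where
  "ip_Ups N o' \<eta> = (\<Sum>p\<in>Ups N. o' p * \<eta> p)"

definition ip_S :: "'a set \<Rightarrow> ('a set \<Rightarrow> real) \<Rightarrow> ('a set \<Rightarrow> real) \<Rightarrow> real" where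
  "ip_S N \<tau> c = (\<Sum>S\<in>Sets2 N. \<tau> S * c S)"

definition DAG :: "'a set \<Rightarrow> ('a \<times> 'a) set set" where
  "DAG N = {G. G \<subseteq> N \<times> N \<and> acyclic G}"

definition pa :: "('a \<times> 'a) set \<Rightarrow> 'a \<Rightarrow> 'a set" where
  "pa G a = {b. (b, a) \<in> G}"

definition adj :: "('a \<times> 'a) set \<Rightarrow> 'a \<Rightarrow> 'a \<Rightarrow> bool" where
  "adj G a b \<longleftrightarrow> (a, b) \<in> G \<or> (b, a) \<in> G"

definition immoralities :: "('a \<times> 'a) set \<Rightarrow> ('a \<times> 'a \<times> 'a) set" where
  "immoralities G = {(a, c, b). (a, c) \<in> G \<and> (b, c) \<in> G \<and> a \<noteq> b \<and> \<not> adj G a b}"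

definition markov_equiv :: "('a \<times> 'a) set \<Rightarrow> ('a \<times> 'a) set \<Rightarrow> bool" where
  "markov_equiv G H \<longleftrightarrow> (\<forall>a b. adj G a b \<longleftrightarrow> adj H a b) \<and> immoralities G = immoralities H"

definition eta_G :: "('a \<times> 'a) set \<Rightarrow> 'a \<times> 'a set \<Rightarrow> real" where
  "eta_G G = (\<lambda>(a, B). if B = pa G a then 1 else 0)"

definition SE_objective :: "'a set \<Rightarrow> ('a \<times> 'a set \<Rightarrow> real) \<Rightarrow> bool" where
  "SE_objective N o' \<longleftrightarrow>
     (\<forall>G\<in>DAG N. \<forall>H\<in>DAG N. markov_equiv G H \<longrightarrow> ip_Ups N o' (eta_G G) = ip_Ups N o' (eta_G H))"

definition c_eta :: "'a set \<Rightarrow> ('a \<times> 'a set \<Rightarrow> real) \<Rightarrow> 'a set \<Rightarrow> real" where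
  "c_eta N \<eta> S = (\<Sum>a\<in>S. \<Sum>B\<in>{B. S - {a} \<subseteq> B \<and> B \<subseteq> N - {a}}. \<eta> (a, B))"

end

theory Submission
  imports Defs
begin

lemma coef0:
  assumes "finite M"
  shows "(\<Sum>L\<in>Pow M. (-1::real)^card L) = (if M={} then 1 else 0)"
  using assms
proof (induction M rule: finite_induct)
  case empty then show ?case by simp
next
  case (insert x F)
  have fin: "finite (Pow F)" using insert by simp
  have disj: "Pow F \<inter> insert x ` Pow F = {}" using insert by auto
  have inj: "inj_on (insert x) (Pow F)" using insert by (auto simp: inj_on_def)
  have "(\<Sum>L\<in>Pow (insert x F). (-1::real)^card L)
      = (\<Sum>L\<in>Pow F. (-1::real)^card L) + (\<Sum>L\<in>insert x ` Pow F. (-1::real)^card L)"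
    unfolding Pow_insert by (rule sum.union_disjoint) (use fin disj in auto)
  also have "(\<Sum>L\<in>insert x ` Pow F. (-1::real)^card L) = (\<Sum>L\<in>Pow F. (-1::real)^card (insert x L))"
    by (simp add: sum.reindex[OF inj])
  also have "\<dots> = (\<Sum>L\<in>Pow F. - ((-1::real)^card L))"
  proof (rule sum.cong)
    fix L assume "L \<in> Pow F"
    then have "x \<notin> L" "finite L" using insert finite_subset by auto
    then show "(-1::real)^card (insert x L) = - ((-1::real)^card L)" by simp
  qed simp
  finally show ?case by (simp add: sum_negf)
qed

lemma coef1:
  assumes "finite B" "J \<subseteq> B"
  shows "(\<Sum>K\<in>{K. J\<subseteq>K \<and> K\<subseteq>B}. (-1::real)^card (K-J)) = (if J=B then 1 else 0)"
proof -
  have "(\<Sum>K\<in>{K. J\<subseteq>K \<and> K\<subseteq>B}. (-1::real)^card (K-J)) = (\<Sum>L\<in>Pow (B-J). (-1::real)^card L)"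
    by (rule sum.reindex_bij_witness[where i="\<lambda>L. L \<union> J" and j="\<lambda>K. K - J"]) (use assms in auto)
  also have "\<dots> = (if J=B then 1 else 0)" using assms by (subst coef0) auto
  finally show ?thesis .
qed

lemma coef2:
  assumes "finite B" "J \<subseteq> B"
  shows "(\<Sum>K\<in>{K. J\<subseteq>K \<and> K\<subseteq>B}. (-1::real)^card (B-K)) = (if J=B then 1 else 0)"
proof -
  have "(\<Sum>K\<in>{K. J\<subseteq>K \<and> K\<subseteq>B}. (-1::real)^card (B-K)) = (\<Sum>L\<in>Pow (B-J). (-1::real)^card L)"
    by (rule sum.reindex_bij_witness[where i="\<lambda>L. B - L" and j="\<lambda>K. B - K"]) (use assms in auto)
  also have "\<dots> = (if J=B then 1 else 0)" using assms by (subst coef0) auto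
  finally show ?thesis .
qed

lemma mob1:
  assumes "finite B"
  shows "(\<Sum>K\<in>Pow B. \<Sum>J\<in>Pow K. (-1::real)^card (K-J) * f J) = f B"
proof -
  have "(\<Sum>K\<in>Pow B. \<Sum>J\<in>Pow K. (-1::real)^card (K-J) * f J)
      = (\<Sum>K\<in>Pow B. \<Sum>J\<in>{J. J \<in> Pow B \<and> J \<subseteq> K}. (-1::real)^card (K-J) * f J)"
    by (rule sum.cong) (auto intro!: sum.cong)
  also have "\<dots> = (\<Sum>J\<in>Pow B. \<Sum>K\<in>{K. K \<in> Pow B \<and> J \<subseteq> K}. (-1::real)^card (K-J) * f J)"
    by (rule sum.swap_restrict) (use assms in auto)
  also have "\<dots> = (\<Sum>J\<in>Pow B. f J * (if J = B then 1 else 0))"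
  proof (rule sum.cong)
    fix J assume J: "J \<in> Pow B"
    have "(\<Sum>K\<in>{K. K \<in> Pow B \<and> J \<subseteq> K}. (-1::real)^card (K-J) * f J)
       = (\<Sum>K\<in>{K. J\<subseteq>K \<and> K\<subseteq>B}. (-1::real)^card (K-J)) * f J"
      by (simp add: sum_distrib_right conj_commute)
    then show "(\<Sum>K\<in>{K. K \<in> Pow B \<and> J \<subseteq> K}. (-1::real)^card (K-J) * f J) = f J * (if J = B then 1 else 0)"
      using coef1[OF assms, of J] J by simp
  qed simp
  also have "\<dots> = f B" using assms by (simp add: if_distrib cong: if_cong)
  finally show ?thesis .
qed

lemma mob2:
  assumes "finite B"
  shows "(\<Sum>K\<in>Pow B. (-1::real)^card (B-K) * (\<Sum>J\<in>Pow K. f J)) = f B"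
proof -
  have "(\<Sum>K\<in>Pow B. (-1::real)^card (B-K) * (\<Sum>J\<in>Pow K. f J))
      = (\<Sum>K\<in>Pow B. \<Sum>J\<in>{J. J \<in> Pow B \<and> J \<subseteq> K}. (-1::real)^card (B-K) * f J)"
    by (rule sum.cong) (auto simp: sum_distrib_left intro!: sum.cong)
  also have "\<dots> = (\<Sum>J\<in>Pow B. \<Sum>K\<in>{K. K \<in> Pow B \<and> J \<subseteq> K}. (-1::real)^card (B-K) * f J)"
    by (rule sum.swap_restrict) (use assms in auto)
  also have "\<dots> = (\<Sum>J\<in>Pow B. f J * (if J = B then 1 else 0))"
  proof (rule sum.cong)
    fix J assume J: "J \<in> Pow B"
    have "(\<Sum>K\<in>{K. K \<in> Pow B \<and> J \<subseteq> K}. (-1::real)^card (B-K) * f J)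
       = (\<Sum>K\<in>{K. J\<subseteq>K \<and> K\<subseteq>B}. (-1::real)^card (B-K)) * f J"
      by (simp add: sum_distrib_right conj_commute)
    then show "(\<Sum>K\<in>{K. K \<in> Pow B \<and> J \<subseteq> K}. (-1::real)^card (B-K) * f J) = f J * (if J = B then 1 else 0)"
      using coef2[OF assms, of J] J by simp
  qed simp
  also have "\<dots> = f B" using assms by (simp add: if_distrib cong: if_cong)
  finally show ?thesis .
qed


definition Fo :: "('a \<times> 'a set \<Rightarrow> real) \<Rightarrow> 'a \<Rightarrow> 'a set \<Rightarrow> real" where
  "Fo o' a X = (if X = {} then 0 else o' (a, X))"

lemma Ups_Sigma: "Ups N = Sigma N (\<lambda>a. {B. B \<noteq> {} \<and> B \<subseteq> N - {a}})"
  by (auto simp: Ups_def)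

lemma finite_Ups: "finite N \<Longrightarrow> finite (Ups N)"
  unfolding Ups_Sigma by (auto intro!: finite_SigmaI)

lemma ip_G:
  assumes "finite N" "G \<in> DAG N"
  shows "ip_Ups N o' (eta_G G) = (\<Sum>c\<in>N. Fo o' c (pa G c))"
proof -
  have sub: "pa G c \<subseteq> N - {c}" for c
  proof -
    have "(c,c) \<notin> G" using assms(2) unfolding DAG_def acyclic_def by auto
    then show ?thesis using assms(2) unfolding DAG_def pa_def by auto
  qed
  have "ip_Ups N o' (eta_G G) = (\<Sum>c\<in>N. \<Sum>B\<in>{B. B \<noteq> {} \<and> B \<subseteq> N - {c}}. o' (c,B) * eta_G G (c,B))"
    unfolding ip_Ups_def Ups_Sigma using assms(1)
    by (subst sum.Sigma) (auto simp: finite_subset)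
  also have "\<dots> = (\<Sum>c\<in>N. Fo o' c (pa G c))"
  proof (rule sum.cong)
    fix c assume "c \<in> N"
    have fin: "finite {B. B \<noteq> {} \<and> B \<subseteq> N - {c}}" using assms(1) by auto
    have "(\<Sum>B\<in>{B. B \<noteq> {} \<and> B \<subseteq> N - {c}}. o' (c,B) * eta_G G (c,B))
        = (\<Sum>B\<in>{B. B \<noteq> {} \<and> B \<subseteq> N - {c}}. if pa G c = B then o' (c,B) else 0)"
      by (rule sum.cong) (auto simp: eta_G_def)
    also have "\<dots> = Fo o' c (pa G c)" using fin sub[of c] by (auto simp: Fo_def)
    finally show "(\<Sum>B\<in>{B. B \<noteq> {} \<and> B \<subseteq> N - {c}}. o' (c,B) * eta_G G (c,B)) = Fo o' c (pa G c)" .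
  qed simp
  finally show ?thesis .
qed

lemma sum_two_nodes:
  assumes "finite N" "a \<in> N" "b \<in> N" "a \<noteq> b" "\<And>c. c \<in> N \<Longrightarrow> c \<noteq> a \<Longrightarrow> c \<noteq> b \<Longrightarrow> g c = 0"
  shows "(\<Sum>c\<in>N. g c) = g a + (g b :: real)"
proof -
  have "(\<Sum>c\<in>N. g c) = (\<Sum>c\<in>{a,b}. g c)"
    by (rule sum.mono_neutral_right) (use assms in auto)
  then show ?thesis using assms by simp
qed

lemma SE_swap:
  assumes fin: "finite N" and se: "SE_objective N o'" and a: "a \<in> N" and b: "b \<in> N" and ab: "a \<noteq> b"
    and B: "B \<subseteq> N - {a,b}"
  shows "Fo o' a B + Fo o' b (insert a B) = Fo o' b B + Fo o' a (insert b B)"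
proof -
  define G where "G = B \<times> {a,b} \<union> {(a,b)}"
  define H where "H = B \<times> {a,b} \<union> {(b,a)}"
  define rG where "rG = (\<lambda>x. if x = a then 1 else if x = b then 2 else (0::nat))"
  define rH where "rH = (\<lambda>x. if x = b then 1 else if x = a then 2 else (0::nat))"
  have "G \<subseteq> inv_image less_than rG" using B ab by (auto simp: G_def rG_def)
  then have "wf G" by (rule wf_subset[rotated]) simp
  then have GD: "G \<in> DAG N" using B a b by (auto simp: DAG_def G_def intro: wf_acyclic)
  have "H \<subseteq> inv_image less_than rH" using B ab by (auto simp: H_def rH_def)
  then have "wf H" by (rule wf_subset[rotated]) simp
  then have HD: "H \<in> DAG N" using B a b by (auto simp: DAG_def H_def intro: wf_acyclic)
  have me: "markov_equiv G H"
    unfolding markov_equiv_def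
  proof
    show "\<forall>x y. adj G x y = adj H x y" by (auto simp: adj_def G_def H_def)
    show "immoralities G = immoralities H"
      using B ab by (auto simp: immoralities_def adj_def G_def H_def)
  qed
  have "ip_Ups N o' (eta_G G) = ip_Ups N o' (eta_G H)" using se GD HD me by (auto simp: SE_objective_def)
  moreover have "ip_Ups N o' (eta_G G) = Fo o' a B + Fo o' b (insert a B)"
  proof -
    have "ip_Ups N o' (eta_G G) = (\<Sum>c\<in>N. Fo o' c (pa G c))" by (rule ip_G[OF fin GD])
    also have "\<dots> = Fo o' a (pa G a) + Fo o' b (pa G b)"
      by (rule sum_two_nodes) (use fin a b ab in \<open>auto simp: Fo_def pa_def G_def\<close>)
    also have "pa G a = B" using B ab by (auto simp: pa_def G_def)
    also have "pa G b = insert a B" using B ab by (auto simp: pa_def G_def)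
    finally show ?thesis .
  qed
  moreover have "ip_Ups N o' (eta_G H) = Fo o' b B + Fo o' a (insert b B)"
  proof -
    have "ip_Ups N o' (eta_G H) = (\<Sum>c\<in>N. Fo o' c (pa H c))" by (rule ip_G[OF fin HD])
    also have "\<dots> = Fo o' a (pa H a) + Fo o' b (pa H b)"
      by (rule sum_two_nodes) (use fin a b ab in \<open>auto simp: Fo_def pa_def H_def\<close>)
    also have "pa H b = B" using B ab by (auto simp: pa_def H_def)
    also have "pa H a = insert b B" using B ab by (auto simp: pa_def H_def)
    finally show ?thesis by simp
  qed
  ultimately show ?thesis by simp
qed


definition mob :: "('a \<times> 'a set \<Rightarrow> real) \<Rightarrow> 'a \<Rightarrow> 'a set \<Rightarrow> real" where
  "mob o' b T = (\<Sum>K\<in>{K. K \<noteq> {} \<and> K \<subseteq> T - {b}}. (-1::real) ^ card (T - {b} - K) * o' (b, K))"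

lemma mob_eq:
  assumes "finite T"
  shows "mob o' b T = (\<Sum>K\<in>Pow (T - {b}). (-1::real) ^ card (T - {b} - K) * Fo o' b K)"
  unfolding mob_def
  by (rule sum.mono_neutral_cong_left) (use assms in \<open>auto simp: Fo_def\<close>)

lemma pow_split:
  assumes "finite R" "b \<notin> R"
  shows "(\<Sum>K\<in>Pow (insert b R). (-1::real)^card (insert b R - K) * g K)
       = (\<Sum>K\<in>Pow R. (-1::real)^card (R - K) * (g (insert b K) - g K))"
proof -
  have fin: "finite (Pow R)" using assms by simp
  have disj: "Pow R \<inter> insert b ` Pow R = {}" using assms by auto
  have inj: "inj_on (insert b) (Pow R)" using assms by (auto simp: inj_on_def)
  have "(\<Sum>K\<in>Pow (insert b R). (-1::real)^card (insert b R - K) * g K)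
      = (\<Sum>K\<in>Pow R. (-1::real)^card (insert b R - K) * g K)
        + (\<Sum>K\<in>insert b ` Pow R. (-1::real)^card (insert b R - K) * g K)"
    unfolding Pow_insert by (rule sum.union_disjoint) (use fin disj in auto)
  also have "(\<Sum>K\<in>insert b ` Pow R. (-1::real)^card (insert b R - K) * g K)
      = (\<Sum>K\<in>Pow R. (-1::real)^card (R - K) * g (insert b K))"
  proof -
    have "(\<Sum>K\<in>insert b ` Pow R. (-1::real)^card (insert b R - K) * g K)
        = (\<Sum>K\<in>Pow R. (-1::real)^card (insert b R - insert b K) * g (insert b K))"
      by (simp add: sum.reindex[OF inj])
    also have "\<dots> = (\<Sum>K\<in>Pow R. (-1::real)^card (R - K) * g (insert b K))"
      by (rule sum.cong) (use assms in \<open>auto simp: insert_Diff_if\<close>)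
    finally show ?thesis .
  qed
  also have "(\<Sum>K\<in>Pow R. (-1::real)^card (insert b R - K) * g K)
      = (\<Sum>K\<in>Pow R. - ((-1::real)^card (R - K) * g K))"
  proof (rule sum.cong)
    fix K assume "K \<in> Pow R"
    then have "insert b R - K = insert b (R - K)" "b \<notin> R - K" "finite (R - K)" using assms by auto
    then show "(-1::real)^card (insert b R - K) * g K = - ((-1::real)^card (R - K) * g K)" by simp
  qed simp
  finally show ?thesis by (simp add: sum_negf algebra_simps sum.distrib sum_subtractf)
qed

lemma indep:
  assumes fin: "finite N" and se: "SE_objective N o'" and T: "T \<subseteq> N" and a: "a \<in> T" and b: "b \<in> T"
  shows "mob o' a T = mob o' b T"
proof (cases "a = b")
  case True then show ?thesis by simp
next
  case ab: False
  define R where "R = T - {a,b}"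
  have finT: "finite T" using fin T finite_subset by auto
  have finR: "finite R" using finT by (simp add: R_def)
  have Ta: "T - {a} = insert b R" and Tb: "T - {b} = insert a R" using a b ab by (auto simp: R_def)
  have "mob o' a T = (\<Sum>K\<in>Pow R. (-1::real)^card (R - K) * (Fo o' a (insert b K) - Fo o' a K))"
    unfolding mob_eq[OF finT] Ta by (rule pow_split) (use finR in \<open>auto simp: R_def\<close>)
  also have "\<dots> = (\<Sum>K\<in>Pow R. (-1::real)^card (R - K) * (Fo o' b (insert a K) - Fo o' b K))"
  proof (rule sum.cong)
    fix K assume "K \<in> Pow R"
    then have KN: "K \<subseteq> N - {a,b}" using T by (auto simp: R_def)
    have "Fo o' a K + Fo o' b (insert a K) = Fo o' b K + Fo o' a (insert b K)"
      using SE_swap[OF fin se _ _ ab KN] a b T by auto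
    then show "(-1::real)^card (R - K) * (Fo o' a (insert b K) - Fo o' a K) = (-1::real)^card (R - K) * (Fo o' b (insert a K) - Fo o' b K)"
      by auto
  qed simp
  also have "\<dots> = mob o' b T"
    unfolding mob_eq[OF finT] Tb by (rule pow_split[symmetric]) (use finR in \<open>auto simp: R_def\<close>)
  finally show ?thesis .
qed

lemma ipS_expand:
  assumes fin: "finite N"
  shows "ip_S N \<tau> (c_eta N \<eta>) = (\<Sum>(a,B)\<in>Ups N. \<eta> (a,B) * (\<Sum>K\<in>{K. K \<noteq> {} \<and> K \<subseteq> B}. \<tau> (insert a K)))"
proof -
  have finS: "finite (Sets2 N)" using fin by (auto simp: Sets2_def)
  have finU: "finite (Ups N)" by (rule finite_Ups[OF fin])
  have "ip_S N \<tau> (c_eta N \<eta>) = (\<Sum>S\<in>Sets2 N. \<Sum>a\<in>S. \<Sum>B\<in>{B. S - {a} \<subseteq> B \<and> B \<subseteq> N - {a}}. \<tau> S * \<eta> (a,B))"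
    unfolding ip_S_def c_eta_def by (simp add: sum_distrib_left)
  also have "\<dots> = (\<Sum>S\<in>Sets2 N. \<Sum>(a,B)\<in>(SIGMA a:S. {B. S - {a} \<subseteq> B \<and> B \<subseteq> N - {a}}). \<tau> S * \<eta> (a,B))"
  proof (rule sum.cong)
    fix S assume "S \<in> Sets2 N"
    then have "finite S" using fin by (auto simp: Sets2_def finite_subset)
    then show "(\<Sum>a\<in>S. \<Sum>B\<in>{B. S - {a} \<subseteq> B \<and> B \<subseteq> N - {a}}. \<tau> S * \<eta> (a,B))
      = (\<Sum>(a,B)\<in>(SIGMA a:S. {B. S - {a} \<subseteq> B \<and> B \<subseteq> N - {a}}). \<tau> S * \<eta> (a,B))"
      using fin by (subst sum.Sigma) auto
  qed simp
  also have "\<dots> = (\<Sum>(S,p)\<in>(SIGMA S:Sets2 N. (SIGMA a:S. {B. S - {a} \<subseteq> B \<and> B \<subseteq> N - {a}})). \<tau> S * \<eta> p)"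
    using finS fin by (subst sum.Sigma) (auto simp: Sets2_def finite_subset split_def)
  also have "\<dots> = (\<Sum>(p,K)\<in>(SIGMA p:Ups N. {K. K \<noteq> {} \<and> K \<subseteq> snd p}). \<tau> (insert (fst p) K) * \<eta> p)"
  proof (rule sum.reindex_bij_witness[where i="\<lambda>(p,K). (insert (fst p) K, p)" and j="\<lambda>(S,p). (p, S - {fst p})"])
    fix x assume x: "x \<in> (SIGMA S:Sets2 N. (SIGMA a:S. {B. S - {a} \<subseteq> B \<and> B \<subseteq> N - {a}}))"
    then obtain S a B where xe: "x = (S,(a,B))" and S: "S \<in> Sets2 N" and aS: "a \<in> S"
      and B1: "S - {a} \<subseteq> B" and B2: "B \<subseteq> N - {a}" by auto
    have finS': "finite S" using S fin by (auto simp: Sets2_def finite_subset)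
    have c2: "2 \<le> card S" using S by (auto simp: Sets2_def)
    have ne: "S - {a} \<noteq> {}"
    proof
      assume "S - {a} = {}"
      then have "S \<subseteq> {a}" by auto
      then have "card S \<le> 1" using card_mono[of "{a}" S] by auto
      then show False using c2 by simp
    qed
    show "(\<lambda>(p,K). (insert (fst p) K, p)) ((\<lambda>(S,p). (p, S - {fst p})) x) = x"
      using xe aS by auto
    show "(\<lambda>(S,p). (p, S - {fst p})) x \<in> (SIGMA p:Ups N. {K. K \<noteq> {} \<and> K \<subseteq> snd p})"
      using xe ne B1 B2 S aS by (auto simp: Ups_def Sets2_def)
    show "(case (\<lambda>(S,p). (p, S - {fst p})) x of (p,K) \<Rightarrow> \<tau> (insert (fst p) K) * \<eta> p) = (case x of (S,p) \<Rightarrow> \<tau> S * \<eta> p)"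
      using xe aS by (auto simp: insert_absorb)
  next
    fix y assume y: "y \<in> (SIGMA p:Ups N. {K. K \<noteq> {} \<and> K \<subseteq> snd p})"
    obtain a B K where ye: "y = ((a,B),K)" by (cases y) auto
    have aN: "a \<in> N" and BN: "B \<subseteq> N - {a}"
      and Kne: "K \<noteq> {}" and KB: "K \<subseteq> B" using y ye by (auto simp: Ups_def)
    have aK: "a \<notin> K" using KB BN by blast
    have KN: "K \<subseteq> N" using KB BN by blast
    have finK: "finite K" using finite_subset[OF KN fin] .
    obtain k where k: "k \<in> K" using Kne by auto
    have "card {a, k} \<le> card (insert a K)" by (rule card_mono) (use finK k in auto)

    have "a \<noteq> k" using aK k by blast
    then have "card {a,k} = 2" by simp
    moreover note \<open>card {a, k} \<le> card (insert a K)\<close>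
    ultimately have c2: "2 \<le> card (insert a K)" by linarith
    show "(\<lambda>(S,p). (p, S - {fst p})) ((\<lambda>(p,K). (insert (fst p) K, p)) y) = y"
      using ye aK by auto
    show "(\<lambda>(p,K). (insert (fst p) K, p)) y \<in> (SIGMA S:Sets2 N. (SIGMA a:S. {B. S - {a} \<subseteq> B \<and> B \<subseteq> N - {a}}))"
      using ye c2 aN KB BN by (auto simp: Sets2_def)
  qed
  also have "\<dots> = (\<Sum>p\<in>Ups N. \<Sum>K\<in>{K. K \<noteq> {} \<and> K \<subseteq> snd p}. \<tau> (insert (fst p) K) * \<eta> p)"
    using finU fin by (subst sum.Sigma) (auto simp: Ups_def finite_subset split_def)
  also have "\<dots> = (\<Sum>(a,B)\<in>Ups N. \<eta> (a,B) * (\<Sum>K\<in>{K. K \<noteq> {} \<and> K \<subseteq> B}. \<tau> (insert a K)))"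
    by (rule sum.cong) (auto simp: sum_distrib_left mult.commute)
  finally show ?thesis .
qed


lemma char:
  assumes fin: "finite N" and h: "\<forall>\<eta>. ip_Ups N o' \<eta> = ip_S N \<tau> (c_eta N \<eta>)" and p: "(a,B) \<in> Ups N"
  shows "o' (a,B) = (\<Sum>K\<in>{K. K \<noteq> {} \<and> K \<subseteq> B}. \<tau> (insert a K))"
proof -
  define \<eta> where "\<eta> = (\<lambda>q. if q = (a,B) then 1 else (0::real))"
  have finU: "finite (Ups N)" by (rule finite_Ups[OF fin])
  have "ip_Ups N o' \<eta> = (\<Sum>q\<in>Ups N. if q = (a,B) then o' q else 0)"
    unfolding ip_Ups_def \<eta>_def by (rule sum.cong) auto
  also have "\<dots> = o' (a,B)" using finU p by simp
  finally have 1: "ip_Ups N o' \<eta> = o' (a,B)" .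
  have "ip_S N \<tau> (c_eta N \<eta>) = (\<Sum>(x,C)\<in>Ups N. \<eta> (x,C) * (\<Sum>K\<in>{K. K \<noteq> {} \<and> K \<subseteq> C}. \<tau> (insert x K)))"
    by (rule ipS_expand[OF fin])
  also have "\<dots> = (\<Sum>q\<in>Ups N. if q = (a,B) then (\<Sum>K\<in>{K. K \<noteq> {} \<and> K \<subseteq> snd q}. \<tau> (insert (fst q) K)) else 0)"
    unfolding \<eta>_def by (rule sum.cong) (auto split: if_splits)
  also have "\<dots> = (\<Sum>K\<in>{K. K \<noteq> {} \<and> K \<subseteq> B}. \<tau> (insert a K))" using finU p by simp
  finally show ?thesis using 1 h by simp
qed

lemma formula:
  assumes fin: "finite N" and h: "\<forall>\<eta>. ip_Ups N o' \<eta> = ip_S N \<tau> (c_eta N \<eta>)"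
    and T: "T \<in> Sets2 N" and b: "b \<in> T"
  shows "\<tau> T = mob o' b T"
proof -
  define R where "R = T - {b}"
  have TN: "T \<subseteq> N" and c2: "2 \<le> card T" using T by (auto simp: Sets2_def)
  have finT: "finite T" using finite_subset[OF TN fin] .
  have finR: "finite R" using finT by (simp add: R_def)
  have Rne: "R \<noteq> {}"
  proof
    assume "R = {}"
    then have "T \<subseteq> {b}" by (auto simp: R_def)
    then have "card T \<le> 1" using card_mono[of "{b}" T] by auto
    then show False using c2 by simp
  qed
  define hh where "hh = (\<lambda>K. if K = {} then 0 else \<tau> (insert b K))"
  have key: "Fo o' b K = (\<Sum>J\<in>Pow K. hh J)" if K: "K \<subseteq> R" for K
  proof (cases "K = {}")
    case True then show ?thesis by (simp add: Fo_def hh_def)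
  next
    case False
    have "(b,K) \<in> Ups N" using K False TN b by (auto simp: Ups_def R_def)
    then have "o' (b,K) = (\<Sum>J\<in>{J. J \<noteq> {} \<and> J \<subseteq> K}. \<tau> (insert b J))" by (rule char[OF fin h])
    also have "\<dots> = (\<Sum>J\<in>Pow K. hh J)"
      by (rule sum.mono_neutral_cong_left) (use finite_subset[OF K finR] in \<open>auto simp: hh_def\<close>)
    finally show ?thesis using False by (simp add: Fo_def)
  qed
  have "mob o' b T = (\<Sum>K\<in>Pow R. (-1::real) ^ card (R - K) * Fo o' b K)"
    unfolding mob_eq[OF finT] R_def ..
  also have "\<dots> = (\<Sum>K\<in>Pow R. (-1::real) ^ card (R - K) * (\<Sum>J\<in>Pow K. hh J))"
    by (rule sum.cong) (auto simp: key)
  also have "\<dots> = hh R" by (rule mob2[OF finR])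
  also have "\<dots> = \<tau> T" using Rne b by (simp add: hh_def R_def insert_absorb)
  finally show ?thesis by simp
qed

theorem lemma10:
  fixes N :: "'a set" and o' :: "'a \<times> 'a set \<Rightarrow> real"
  assumes "finite N" and "2 \<le> card N"
    and "SE_objective N o'"
  shows "(\<exists>!\<tau>. (\<forall>T. T \<notin> Sets2 N \<longrightarrow> \<tau> T = 0) \<and>
              (\<forall>\<eta>. ip_Ups N o' \<eta> = ip_S N \<tau> (c_eta N \<eta>)))
    \<and> (\<forall>\<tau>. ((\<forall>T. T \<notin> Sets2 N \<longrightarrow> \<tau> T = 0) \<and>
              (\<forall>\<eta>. ip_Ups N o' \<eta> = ip_S N \<tau> (c_eta N \<eta>))) \<longrightarrow>
         (\<forall>T\<in>Sets2 N. \<forall>b\<in>T.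
            \<tau> T = (\<Sum>K\<in>{K. K \<noteq> {} \<and> K \<subseteq> T - {b}}.
                     (-1::real) ^ card (T - {b} - K) * o' (b, K))))"
proof -
  note fin = assms(1) and se = assms(3)
  define P where "P = (\<lambda>\<tau>. (\<forall>T. T \<notin> Sets2 N \<longrightarrow> \<tau> T = 0) \<and>
              (\<forall>\<eta>. ip_Ups N o' \<eta> = ip_S N \<tau> (c_eta N \<eta>)))"
  have form: "\<tau> T = mob o' b T" if "P \<tau>" "T \<in> Sets2 N" "b \<in> T" for \<tau> T b
    using formula[OF fin _ that(2,3)] that(1) by (auto simp: P_def)
  define \<tau>0 where "\<tau>0 = (\<lambda>T. if T \<in> Sets2 N then mob o' (SOME b. b \<in> T) T else 0)"
  have P0: "P \<tau>0"
    unfolding P_def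
  proof (intro conjI allI impI)
    fix T assume "T \<notin> Sets2 N" then show "\<tau>0 T = 0" by (simp add: \<tau>0_def)
  next
    fix \<eta>
    have eq: "(\<Sum>K\<in>{K. K \<noteq> {} \<and> K \<subseteq> B}. \<tau>0 (insert a K)) = o' (a,B)" if p: "(a,B) \<in> Ups N" for a B
    proof -
      have aN: "a \<in> N" and BN: "B \<subseteq> N - {a}" and Bne: "B \<noteq> {}" using p by (auto simp: Ups_def)
      have finB: "finite B" using finite_subset[OF _ fin] BN by blast
      have t: "\<tau>0 (insert a K) = (\<Sum>J\<in>Pow K. (-1::real)^card (K-J) * Fo o' a J)" if K: "K \<subseteq> B" "K \<noteq> {}" for K
      proof -
        have aK: "a \<notin> K" using K BN by blast
        have KN: "K \<subseteq> N" using K BN by blast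
        have finK: "finite K" using finite_subset[OF KN fin] .
        obtain k where k: "k \<in> K" using K by blast
        have "card {a, k} \<le> card (insert a K)" by (rule card_mono) (use finK k in auto)
        moreover have "a \<noteq> k" using aK k by blast
        then have "card {a,k} = 2" by simp
        ultimately have c2: "2 \<le> card (insert a K)" by linarith
        have S: "insert a K \<in> Sets2 N" using c2 aN KN by (auto simp: Sets2_def)
        have sm: "(SOME b. b \<in> insert a K) \<in> insert a K" by (rule someI[of _ a]) simp
        have "\<tau>0 (insert a K) = mob o' (SOME b. b \<in> insert a K) (insert a K)" using S by (simp add: \<tau>0_def)
        also have "\<dots> = mob o' a (insert a K)"
          by (rule indep[OF fin se _ sm]) (use aN KN in auto)
        also have "\<dots> = (\<Sum>J\<in>Pow K. (-1::real)^card (K-J) * Fo o' a J)"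
          using mob_eq[of "insert a K" o' a] finK aK by simp
        finally show ?thesis .
      qed
      have "(\<Sum>K\<in>{K. K \<noteq> {} \<and> K \<subseteq> B}. \<tau>0 (insert a K))
          = (\<Sum>K\<in>Pow B. \<Sum>J\<in>Pow K. (-1::real)^card (K-J) * Fo o' a J)"
        by (rule sum.mono_neutral_cong_left) (use finB in \<open>auto simp: t Fo_def\<close>)
      also have "\<dots> = Fo o' a B" by (rule mob1[OF finB])
      finally show ?thesis using Bne by (simp add: Fo_def)
    qed
    have "ip_S N \<tau>0 (c_eta N \<eta>) = (\<Sum>(a,B)\<in>Ups N. \<eta> (a,B) * (\<Sum>K\<in>{K. K \<noteq> {} \<and> K \<subseteq> B}. \<tau>0 (insert a K)))"
      by (rule ipS_expand[OF fin])
    also have "\<dots> = (\<Sum>(a,B)\<in>Ups N. o' (a,B) * \<eta> (a,B))"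
      by (rule sum.cong) (auto simp: eq)
    also have "\<dots> = ip_Ups N o' \<eta>" unfolding ip_Ups_def by (simp add: split_def)
    finally show "ip_Ups N o' \<eta> = ip_S N \<tau>0 (c_eta N \<eta>)" by simp
  qed
  have uniq: "\<tau> = \<tau>0" if "P \<tau>" for \<tau>
  proof
    fix T show "\<tau> T = \<tau>0 T"
    proof (cases "T \<in> Sets2 N")
      case True
      then have "2 \<le> card T" by (simp add: Sets2_def)
      then have "T \<noteq> {}" by auto
      then obtain b where b: "b \<in> T" by blast
      show ?thesis using form[OF that True b] form[OF P0 True b] by simp
    next
      case False then show ?thesis using that P0 by (simp add: P_def)
    qed
  qed
  have "\<exists>!\<tau>. P \<tau>" using P0 uniq by blast
  moreover have "\<forall>\<tau>. P \<tau> \<longrightarrow> (\<forall>T\<in>Sets2 N. \<forall>b\<in>T.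
            \<tau> T = (\<Sum>K\<in>{K. K \<noteq> {} \<and> K \<subseteq> T - {b}}.
                     (-1::real) ^ card (T - {b} - K) * o' (b, K)))"
    using form by (simp add: mob_def)
  ultimately show ?thesis by (simp add: P_def)
qed

end
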